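(* Let $K$ be a field, $\vartheta$ any one of the four types (left, right, pre-two-sided, two-sided), and $\mathcal A$ a $K$-algebra. Then $\mathcal A$ is $\vartheta$-quasi-stable if and only if either $\mathcal A\simeq K\times K$ (product algebra with componentwise operations) or $\mathcal A$ is a local $K$-algebra which is algebraic over $K$.
   Context: Algebras are associative, unital and nonzero. A local algebra is one with a unique maximal left ideal. $\mathcal A$ is algebraic over $K$ if every element is a root of a nonzero polynomial over $K$. A $K$-subspace $V$ of $\mathcal A$ is a left (resp. right) Mathieu subspace if whenever $a^m\in V$ for all $m\ge1$, then for every $b\in\mathcal A$, $ba^m\in V$ (resp. $a^mb\in V$) for all sufficiently large $m$; pre-two-sided if both left and right; two-sided if whenever $a^m\in V$ for all $m\ge1$, for all $b,c\in\mathcal A$, $ba^mc\in V$ for all sufficiently large $m$. $\mathcal A$ is $\vartheta$-quasi-stable if every $K$-subspace $V$ with $1\notin V$ is a $\vartheta$-Mathieu subspace of $\mathcal A$. *)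

theory Defs
  imports "HOL-Computational_Algebra.Polynomial"
begin

text \<open>A (unital, associative, nonzero) K-algebra is modelled by a type 'b of class ring_1
  (which includes 0 \<noteq> 1) together with a ring homomorphism ofK from the field K into
  the centre of 'b; scalar multiplication c \<cdot> x is ofK c * x.\<close>

definition K_algebra :: "('a::field \<Rightarrow> 'b::ring_1) \<Rightarrow> bool" where
  "K_algebra ofK \<longleftrightarrow>
     (\<forall>c d. ofK (c + d) = ofK c + ofK d) \<and>
     (\<forall>c d. ofK (c * d) = ofK c * ofK d) \<and>
     ofK 1 = 1 \<and>
     (\<forall>c x. ofK c * x = x * ofK c)"

definition K_subspace :: "('a::field \<Rightarrow> 'b::ring_1) \<Rightarrow> 'b set \<Rightarrow> bool" where
  "K_subspace ofK V \<longleftrightarrow>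
     0 \<in> V \<and> (\<forall>x\<in>V. \<forall>y\<in>V. x + y \<in> V) \<and> (\<forall>c. \<forall>x\<in>V. ofK c * x \<in> V)"

datatype mtype = LeftM | RightM | PreTwoSidedM | TwoSidedM

definition mathieu_subspace :: "mtype \<Rightarrow> ('a::field \<Rightarrow> 'b::ring_1) \<Rightarrow> 'b set \<Rightarrow> bool" where
  "mathieu_subspace \<theta> ofK V \<longleftrightarrow> K_subspace ofK V \<and>
     (case \<theta> of
        LeftM \<Rightarrow> (\<forall>a. (\<forall>m\<ge>1. a ^ m \<in> V) \<longrightarrow>
                    (\<forall>b. \<exists>N. \<forall>m\<ge>N. b * a ^ m \<in> V))
      | RightM \<Rightarrow> (\<forall>a. (\<forall>m\<ge>1. a ^ m \<in> V) \<longrightarrow>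
                    (\<forall>b. \<exists>N. \<forall>m\<ge>N. a ^ m * b \<in> V))
      | PreTwoSidedM \<Rightarrow> (\<forall>a. (\<forall>m\<ge>1. a ^ m \<in> V) \<longrightarrow>
                    (\<forall>b. \<exists>N. \<forall>m\<ge>N. b * a ^ m \<in> V) \<and>
                    (\<forall>b. \<exists>N. \<forall>m\<ge>N. a ^ m * b \<in> V))
      | TwoSidedM \<Rightarrow> (\<forall>a. (\<forall>m\<ge>1. a ^ m \<in> V) \<longrightarrow>
                    (\<forall>b c. \<exists>N. \<forall>m\<ge>N. b * a ^ m * c \<in> V)))"

definition quasi_stable :: "mtype \<Rightarrow> ('a::field \<Rightarrow> 'b::ring_1) \<Rightarrow> bool" where
  "quasi_stable \<theta> ofK \<longleftrightarrow>
     (\<forall>V. K_subspace ofK V \<and> 1 \<notin> V \<longrightarrow> mathieu_subspace \<theta> ofK V)"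

definition left_ideal :: "'b::ring_1 set \<Rightarrow> bool" where
  "left_ideal I \<longleftrightarrow> 0 \<in> I \<and> (\<forall>x\<in>I. \<forall>y\<in>I. x + y \<in> I) \<and> (\<forall>b. \<forall>x\<in>I. b * x \<in> I)"

definition maximal_left_ideal :: "'b::ring_1 set \<Rightarrow> bool" where
  "maximal_left_ideal M \<longleftrightarrow> left_ideal M \<and> M \<noteq> UNIV \<and>
     (\<forall>J. left_ideal J \<and> M \<subseteq> J \<and> J \<noteq> UNIV \<longrightarrow> J = M)"

definition local_ring :: "'b::ring_1 itself \<Rightarrow> bool" where
  "local_ring _ \<longleftrightarrow> (\<exists>!M::'b set. maximal_left_ideal M)"

definition peval :: "('a::field \<Rightarrow> 'b::ring_1) \<Rightarrow> 'a poly \<Rightarrow> 'b \<Rightarrow> 'b" where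
  "peval ofK p x = (\<Sum>i\<le>degree p. ofK (coeff p i) * x ^ i)"

definition algebraic_over :: "('a::field \<Rightarrow> 'b::ring_1) \<Rightarrow> bool" where
  "algebraic_over ofK \<longleftrightarrow> (\<forall>x. \<exists>p. p \<noteq> 0 \<and> peval ofK p x = 0)"

definition iso_KxK :: "('a::field \<Rightarrow> 'b::ring_1) \<Rightarrow> bool" where
  "iso_KxK ofK \<longleftrightarrow> (\<exists>f :: 'b \<Rightarrow> 'a \<times> 'a. bij f \<and>
     (\<forall>x y. f (x + y) = (fst (f x) + fst (f y), snd (f x) + snd (f y))) \<and>
     (\<forall>x y. f (x * y) = (fst (f x) * fst (f y), snd (f x) * snd (f y))) \<and>
     (\<forall>c x. f (ofK c * x) = (c * fst (f x), c * snd (f x))) \<and>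
     f 1 = (1, 1))"

end

theory Submission imports Defs begin

locale kalg =
  fixes ofK :: "'a::field \<Rightarrow> 'b::ring_1"
  assumes KA: "K_algebra ofK"
begin

lemma ofK_add: "ofK (c + d) = ofK c + ofK d" using KA unfolding K_algebra_def by blast
lemma ofK_mult: "ofK (c * d) = ofK c * ofK d" using KA unfolding K_algebra_def by blast
lemma ofK_1[simp]: "ofK 1 = 1" using KA unfolding K_algebra_def by blast
lemma ofK_comm: "ofK c * x = x * ofK c" using KA unfolding K_algebra_def by blast
lemma ofK_0[simp]: "ofK 0 = 0"
  using ofK_add[of 0 0] by simp
lemma ofK_uminus: "ofK (- c) = - ofK c"
  using ofK_add[of c "-c"] by (simp add: eq_neg_iff_add_eq_0 add.commute)
lemma ofK_diff: "ofK (c - d) = ofK c - ofK d"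
  using ofK_add[of c "-d"] ofK_uminus[of d] by simp
lemma ofK_comm2: "ofK c * (x * y) = x * (ofK c * y)"
proof -
  have "ofK c * (x * y) = (ofK c * x) * y" by (simp only: mult.assoc)
  also have "\<dots> = (x * ofK c) * y" by (subst ofK_comm) (rule refl)
  also have "\<dots> = x * (ofK c * y)" by (simp only: mult.assoc)
  finally show ?thesis .
qed
lemma ofK_eq0: assumes "ofK c = 0" shows "c = 0"
proof (rule ccontr)
  assume "c \<noteq> 0"
  then have "1 = ofK (c * inverse c)" by simp
  also have "\<dots> = ofK c * ofK (inverse c)" by (rule ofK_mult)
  finally show False using assms by simp
qed
lemma ofK_smult_eq0: assumes "ofK c * y = 0" "c \<noteq> 0" shows "y = 0"
proof -
  have "y = ofK (inverse c * c) * y" using assms by simp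
  also have "\<dots> = ofK (inverse c) * (ofK c * y)" by (simp add: ofK_mult mult.assoc)
  finally show ?thesis using assms by simp
qed

lemma peval_upto:
  assumes "degree p \<le> n"
  shows "peval ofK p x = (\<Sum>i\<le>n. ofK (coeff p i) * x ^ i)"
  unfolding peval_def
  by (rule sum.mono_neutral_left) (use assms in \<open>auto simp: coeff_eq_0 not_le intro: ccontr\<close>)

lemma peval_add: "peval ofK (p + q) x = peval ofK p x + peval ofK q x"
proof -
  let ?n = "max (degree p) (degree q)"
  have "degree (p + q) \<le> ?n" by (simp add: degree_add_le)
  then have "peval ofK (p + q) x = (\<Sum>i\<le>?n. ofK (coeff (p+q) i) * x ^ i)" by (rule peval_upto)
  also have "\<dots> = (\<Sum>i\<le>?n. ofK (coeff p i) * x ^ i) + (\<Sum>i\<le>?n. ofK (coeff q i) * x ^ i)"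
    by (simp add: ofK_add distrib_right sum.distrib)
  also have "\<dots> = peval ofK p x + peval ofK q x"
    using peval_upto[of p ?n x] peval_upto[of q ?n x] by simp
  finally show ?thesis .
qed

lemma peval_smult: "peval ofK (smult c p) x = ofK c * peval ofK p x"
proof -
  have "peval ofK (smult c p) x = (\<Sum>i\<le>degree p. ofK (coeff (smult c p) i) * x ^ i)"
    by (rule peval_upto) (simp add: degree_smult_le)
  also have "\<dots> = ofK c * peval ofK p x"
    by (simp add: peval_def ofK_mult mult.assoc sum_distrib_left)
  finally show ?thesis .
qed

lemma peval_pCons: "peval ofK (pCons a p) x = ofK a + x * peval ofK p x"
proof -
  have "peval ofK (pCons a p) x = (\<Sum>i\<le>Suc (degree p). ofK (coeff (pCons a p) i) * x ^ i)"
    by (rule peval_upto) (simp add: degree_pCons_le)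
  also have "\<dots> = ofK a + (\<Sum>i\<le>degree p. ofK (coeff p i) * (x * x ^ i))"
    by (simp add: sum.atMost_Suc_shift del: sum.atMost_Suc)
  also have "\<dots> = ofK a + x * peval ofK p x"
    by (simp add: peval_def sum_distrib_left ofK_comm2)
  finally show ?thesis .
qed

lemma peval_0[simp]: "peval ofK 0 x = 0" by (simp add: peval_def)
lemma peval_1[simp]: "peval ofK 1 x = 1" by (simp add: peval_def)

lemma peval_mult: "peval ofK (p * q) x = peval ofK p x * peval ofK q x"
proof (induction p)
  case 0 then show ?case by simp
next
  case (pCons a p)
  have "peval ofK (pCons a p * q) x = peval ofK (smult a q + pCons 0 (p * q)) x"
    by simp
  also have "\<dots> = ofK a * peval ofK q x + x * (peval ofK p x * peval ofK q x)"
    by (simp add: peval_add peval_smult peval_pCons pCons.IH)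
  also have "\<dots> = peval ofK (pCons a p) x * peval ofK q x"
    by (simp add: peval_pCons distrib_right mult.assoc)
  finally show ?case .
qed

lemma peval_comm: "peval ofK p x * peval ofK q x = peval ofK q x * peval ofK p x"
proof -
  have "peval ofK p x * peval ofK q x = peval ofK (p * q) x" by (simp only: peval_mult)
  also have "p * q = q * p" by (rule mult.commute)
  finally show ?thesis by (simp only: peval_mult)
qed

lemma peval_diff: "peval ofK (p - q) x = peval ofK p x - peval ofK q x"
proof -
  have "peval ofK p x = peval ofK ((p - q) + q) x" by simp
  also have "\<dots> = peval ofK (p - q) x + peval ofK q x" by (rule peval_add)
  finally show ?thesis by (simp add: algebra_simps)
qed

lemma peval_X[simp]: "peval ofK [:0,1:] x = x"
  by (simp add: peval_pCons)

lemma peval_power: "peval ofK (p ^ k) x = peval ofK p x ^ k"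
  by (induction k) (simp_all add: peval_mult)

lemma peval_monom: "peval ofK (monom c k) x = ofK c * x ^ k"
proof -
  have "monom c k = smult c ([:0,1:] ^ k)" by (simp add: monom_altdef)
  then show ?thesis by (simp add: peval_smult peval_power)
qed

end
definition isunit :: "'b::ring_1 \<Rightarrow> bool" where
  "isunit x \<longleftrightarrow> (\<exists>z. z * x = 1 \<and> x * z = 1)"

lemma geom_right: "(1 - (y::'b::ring_1)) * (\<Sum>i<k. y ^ i) = 1 - y ^ k"
proof (induction k)
  case (Suc k)
  have "(1 - y) * (\<Sum>i<Suc k. y ^ i) = (1 - y) * (\<Sum>i<k. y ^ i) + (1 - y) * y ^ k"
    by (simp add: distrib_left)
  also have "\<dots> = (1 - y ^ k) + (y ^ k - y * y ^ k)"
    using Suc.IH by (simp add: left_diff_distrib)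
  finally show ?case by simp
qed simp

lemma geom_left: "(\<Sum>i<k. (y::'b::ring_1) ^ i) * (1 - y) = 1 - y ^ k"
proof (induction k)
  case (Suc k)
  have "(\<Sum>i<Suc k. y ^ i) * (1 - y) = (\<Sum>i<k. y ^ i) * (1 - y) + y ^ k * (1 - y)"
    by (simp add: distrib_right)
  also have "\<dots> = (1 - y ^ k) + (y ^ k - y ^ k * y)"
    using Suc.IH by (simp add: right_diff_distrib)
  finally show ?case by (simp add: power_commutes)
qed simp

lemma nilp_one_minus_unit: "(x::'b::ring_1) ^ k = 0 \<Longrightarrow> isunit (1 - x)"
  unfolding isunit_def using geom_right[of x k] geom_left[of x k] by auto

lemma leftinv_power: "(z::'b::ring_1) * x = 1 \<Longrightarrow> z ^ n * x ^ n = 1"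
proof (induction n)
  case (Suc n)
  have "z ^ Suc n * x ^ Suc n = (z ^ n * z) * (x * x ^ n)"
    using power_Suc2[of z n] power_Suc[of x n] by (simp only:)
  also have "\<dots> = z ^ n * (z * x) * x ^ n"
    by (simp only: mult.assoc)
  finally have "z ^ Suc n * x ^ Suc n = z ^ n * (z * x) * x ^ n" .
  then show ?case using Suc by simp
qed simp

lemma nilp_no_leftinv: "(x::'b::ring_1) ^ k = 0 \<Longrightarrow> z * x = 1 \<Longrightarrow> False"
  using leftinv_power[of z x k] by simp

lemma left_right_unit: "(l::'b::ring_1) * x = 1 \<Longrightarrow> x * r = 1 \<Longrightarrow> isunit x"
  unfolding isunit_def by (metis mult.assoc mult_1 mult_1_right)

context kalg begin

lemma unit_of_poly: assumes "coeff p 0 = 0" "peval ofK p x = 1" shows "isunit x"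
proof -
  obtain a r where p: "p = pCons a r" by (cases p)
  with assms have "a = 0" by simp
  with p assms have 1: "x * peval ofK r x = 1" by (simp add: peval_pCons)
  have "peval ofK r x * x = x * peval ofK r x"
    using peval_comm[of r x "[:0,1:]"] by simp
  with 1 show ?thesis unfolding isunit_def by auto
qed

lemma trich:
  assumes "p \<noteq> 0" "peval ofK p x = 0"
  shows "(\<exists>k. x ^ k = 0) \<or> (\<exists>e::'b. e * e = e \<and> e \<noteq> 0 \<and> e \<noteq> 1) \<or>
         (\<exists>p. coeff p 0 = 0 \<and> peval ofK p x = 1)"
proof -
  define P where "P = [:0,1:] * p"
  have P0: "P \<noteq> 0" using assms by (simp add: P_def)
  have PE: "peval ofK P x = 0" unfolding P_def peval_mult using assms by simp
  define k where "k = order 0 P"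
  have k1: "k \<noteq> 0" using order_root[of P 0] P0 by (simp add: P_def k_def)
  obtain q where Pq: "P = [:0,1:] ^ k * q" and nd: "\<not> [:0,1:] dvd q"
    using order_decomp[OF P0, of 0] by (auto simp: k_def)
  have c0: "coeff q 0 \<noteq> 0"
    using nd poly_eq_0_iff_dvd[of q 0] by (simp add: poly_0_coeff_0)
  obtain c r where qcr: "q = pCons c r" by (cases q)
  then have cne: "c \<noteq> 0" using c0 by simp
  define z where "z = peval ofK r x"
  have "peval ofK P x = x ^ k * peval ofK q x"
    unfolding Pq by (simp only: peval_mult peval_power peval_X)
  moreover have "peval ofK q x = ofK c + x * z" unfolding qcr z_def by (rule peval_pCons)
  ultimately have xq: "x ^ k * (ofK c + x * z) = 0" using PE by simp
  define s where "s = smult (- inverse c) r"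
  define yp where "yp = [:0,1:] * s"
  define y where "y = peval ofK yp x"
  have y_eq: "y = - (ofK (inverse c) * (x * z))"
  proof -
    have "y = x * (ofK (- inverse c) * z)" unfolding y_def yp_def s_def z_def
      by (simp only: peval_mult peval_X peval_smult)
    then show ?thesis by (simp add: ofK_uminus ofK_comm2)
  qed
  have "1 - y = ofK (inverse c) * (ofK c + x * z)"
    using cne by (simp add: y_eq distrib_left ofK_mult[symmetric])
  then have "x ^ k * (1 - y) = ofK (inverse c) * (x ^ k * (ofK c + x * z))"
    by (simp add: ofK_comm2)
  then have xy: "x ^ k * (1 - y) = 0" using xq by simp
  define e where "e = y ^ k"
  have "yp ^ k = s ^ k * [:0,1:] ^ k" unfolding yp_def power_mult_distrib by (rule mult.commute)
  then have "e = peval ofK (s ^ k) x * x ^ k"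
    unfolding e_def y_def peval_power[symmetric] by (simp only: peval_mult peval_power peval_X)
  then have "e * (1 - y) = 0" using xy by (simp add: mult.assoc)
  then have ey: "e * y = e" by (simp add: algebra_simps)
  have eyj: "e * y ^ j = e" for j
  proof (induction j)
    case (Suc j)
    then show ?case using ey by (simp add: power_Suc2 mult.assoc[symmetric])
  qed simp
  have ee: "e * e = e" using eyj[of k] by (simp add: e_def)
  consider "e = 0" | "e = 1" | "e \<noteq> 0 \<and> e \<noteq> 1" by blast
  then show ?thesis
  proof cases
    case 1
    then have "y ^ k = 0" by (simp add: e_def)
    then obtain G where G: "(1 - y) * G = 1"
      using nilp_one_minus_unit[of y k] unfolding isunit_def by blast
    have "x ^ k = x ^ k * ((1 - y) * G)" using G by simp
    also have "\<dots> = 0" using xy by (simp add: mult.assoc[symmetric])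
    finally show ?thesis by blast
  next
    case 2
    have "coeff (yp ^ k) 0 = 0"
      using k1 by (simp add: poly_0_coeff_0[symmetric] yp_def poly_power)
    moreover have "peval ofK (yp ^ k) x = 1" using 2 by (simp add: e_def y_def peval_power)
    ultimately show ?thesis by blast
  next
    case 3 then show ?thesis using ee by blast
  qed
qed

end

lemma local_of_unit_nilp:
  assumes H: "\<forall>x::'b::ring_1. (\<exists>k. x ^ k = 0) \<or> isunit x"
  shows "local_ring TYPE('b)"
proof -
  define N where "N = {x::'b. \<not> isunit x}"
  have nil: "x \<in> N \<Longrightarrow> \<exists>k. x ^ k = 0" for x using H N_def by auto
  have mulN: "b * x \<in> N" if xN: "x \<in> N" for b x
  proof -
    obtain k where xk: "x ^ k = 0" using nil[OF xN] by blast
    have False if u: "isunit (b * x)"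
    proof -
      obtain z where "z * (b * x) = 1" using u unfolding isunit_def by blast
      then have "(z * b) * x = 1" by (simp only: mult.assoc)
      then show False by (rule nilp_no_leftinv[OF xk])
    qed
    then show ?thesis unfolding N_def by blast
  qed
  have addN: "x + y \<in> N" if "x \<in> N" "y \<in> N" for x y
  proof (rule ccontr)
    assume "x + y \<notin> N"
    then obtain u where u: "u * (x + y) = 1" unfolding N_def isunit_def by auto
    have "u * x \<in> N" using mulN that by blast
    then obtain k where "(u * x) ^ k = 0" using nil by blast
    then have "isunit (1 - u * x)" by (rule nilp_one_minus_unit)
    moreover have "1 - u * x = u * y" using u by (simp add: algebra_simps)
    ultimately show False using mulN[OF that(2), of u] by (simp add: N_def)
  qed
  have zN: "0 \<in> N" by (simp add: N_def isunit_def)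
  have liN: "left_ideal N" using zN addN mulN by (simp add: left_ideal_def)
  have oneN: "1 \<notin> N" by (simp add: N_def isunit_def)
  have sub: "J \<subseteq> N" if "left_ideal J" "J \<noteq> UNIV" for J
  proof
    fix x assume "x \<in> J"
    show "x \<in> N"
    proof (rule ccontr)
      assume "x \<notin> N"
      then obtain z where z: "z * x = 1" unfolding N_def isunit_def by auto
      have "b \<in> J" for b
      proof -
        have "(b * z) * x \<in> J" using that(1) \<open>x \<in> J\<close> by (simp add: left_ideal_def)
        then show ?thesis using z by (simp add: mult.assoc)
      qed
      then show False using that(2) by auto
    qed
  qed
  have maxN: "maximal_left_ideal N"
    unfolding maximal_left_ideal_def using liN oneN sub by auto
  have "M = N" if "maximal_left_ideal M" for M
    using that sub[of M] liN oneN unfolding maximal_left_ideal_def by auto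
  then show ?thesis unfolding local_ring_def using maxN by blast
qed

lemma exists_max:
  assumes "left_ideal (I::'b::ring_1 set)" "1 \<notin> I"
  shows "\<exists>M. maximal_left_ideal M \<and> I \<subseteq> M"
proof -
  define A where "A = {J. left_ideal J \<and> I \<subseteq> J \<and> (1::'b) \<notin> J}"
  have "\<exists>U\<in>A. \<forall>X\<in>C. X \<subseteq> U" if C: "C \<in> chains A" for C
  proof (cases "C = {}")
    case True then show ?thesis using assms by (auto simp: A_def)
  next
    case False
    have CA: "C \<subseteq> A" using chainsD2[OF C] .
    have "left_ideal (\<Union>C)"
      unfolding left_ideal_def
    proof (intro conjI ballI allI)
      show "0 \<in> \<Union>C" using False CA by (auto simp: A_def left_ideal_def)
    next
      fix x y assume "x \<in> \<Union>C" "y \<in> \<Union>C"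
      then obtain X Y where XY: "X \<in> C" "Y \<in> C" "x \<in> X" "y \<in> Y" by auto
      then have "X \<subseteq> Y \<or> Y \<subseteq> X" using chainsD[OF C] by blast
      moreover have "left_ideal X" "left_ideal Y" using XY CA by (auto simp: A_def)
      ultimately show "x + y \<in> \<Union>C" using XY unfolding left_ideal_def by blast
    next
      fix b x assume "x \<in> \<Union>C"
      then obtain X where "X \<in> C" "x \<in> X" by auto
      moreover have "left_ideal X" using \<open>X \<in> C\<close> CA by (auto simp: A_def)
      ultimately show "b * x \<in> \<Union>C" unfolding left_ideal_def by blast
    qed
    moreover have "I \<subseteq> \<Union>C" using False CA by (auto simp: A_def)
    moreover have "1 \<notin> \<Union>C" using CA by (auto simp: A_def)
    ultimately show ?thesis by (auto simp: A_def)
  qed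
  then obtain M where M: "M \<in> A" "\<forall>X\<in>A. M \<subseteq> X \<longrightarrow> X = M"
    using Zorn_Lemma2[of A] by blast
  have "maximal_left_ideal M"
    unfolding maximal_left_ideal_def
  proof (intro conjI allI impI)
    show "left_ideal M" using M by (simp add: A_def)
    show "M \<noteq> UNIV" using M by (auto simp: A_def)
  next
    fix J assume J: "left_ideal J \<and> M \<subseteq> J \<and> J \<noteq> UNIV"
    have "1 \<notin> J"
    proof
      assume "1 \<in> J"
      then have "b * 1 \<in> J" for b using J unfolding left_ideal_def by blast
      then show False using J by auto
    qed
    then show "J = M" using J M by (auto simp: A_def)
  qed
  then show ?thesis using M by (auto simp: A_def)
qed

lemma local_no_idem:
  assumes L: "local_ring TYPE('b::ring_1)" and ee: "(e::'b) * e = e"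
  shows "e = 0 \<or> e = 1"
proof (rule ccontr)
  assume ne: "\<not> (e = 0 \<or> e = 1)"
  define f where "f = 1 - e"
  have ef: "e * f = 0" "f * e = 0" "f * f = f" using ee by (simp_all add: f_def algebra_simps)
  have li: "left_ideal {b * g | b. True}" for g :: 'b
    unfolding left_ideal_def
    by (auto simp: distrib_right[symmetric] mult.assoc[symmetric] intro: exI[of _ 0])
  have "1 \<notin> {b * e | b. True}"
  proof
    assume "1 \<in> {b * e | b. True}"
    then obtain b where "1 = b * e" by auto
    then have "f = b * e * f" by simp
    then have "f = 0" using ef by (simp add: mult.assoc)
    then show False using ne by (simp add: f_def)
  qed
  then obtain M1 where M1: "maximal_left_ideal M1" "{b * e | b. True} \<subseteq> M1"
    using exists_max li by blast
  have "1 \<notin> {b * f | b. True}"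
  proof
    assume "1 \<in> {b * f | b. True}"
    then obtain b where "1 = b * f" by auto
    then have "e = b * f * e" by simp
    then have "e = 0" using ef by (simp add: mult.assoc)
    then show False using ne by simp
  qed
  then obtain M2 where M2: "maximal_left_ideal M2" "{b * f | b. True} \<subseteq> M2"
    using exists_max li by blast
  have "M1 = M2" using L M1 M2 unfolding local_ring_def by blast
  then have "e \<in> M1" "f \<in> M1" using M1 M2 by (auto intro: exI[of _ 1])
  then have "e + f \<in> M1" using M1 by (simp add: maximal_left_ideal_def left_ideal_def)
  then have "1 \<in> M1" by (simp add: f_def)
  moreover have li1: "left_ideal M1" using M1(1) by (simp add: maximal_left_ideal_def)
  ultimately have "b * 1 \<in> M1" for b unfolding left_ideal_def by blast
  then show False using M1 by (auto simp: maximal_left_ideal_def)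
qed


context kalg begin

definition WL where "WL \<longleftrightarrow> (\<forall>V a b. K_subspace ofK V \<and> 1 \<notin> V \<and> (\<forall>m\<ge>1. a ^ m \<in> V) \<longrightarrow> (\<exists>m\<ge>1. b * a ^ m \<in> V))"
definition WR where "WR \<longleftrightarrow> (\<forall>V a b. K_subspace ofK V \<and> 1 \<notin> V \<and> (\<forall>m\<ge>1. a ^ m \<in> V) \<longrightarrow> (\<exists>m\<ge>1. a ^ m * b \<in> V))"

lemma qs_W: assumes "quasi_stable \<theta> ofK" shows "WL \<or> WR"
proof (cases \<theta>)
  case LeftM
  have WL unfolding WL_def
  proof (intro allI impI)
    fix V a b assume H: "K_subspace ofK V \<and> 1 \<notin> V \<and> (\<forall>m\<ge>1. a ^ m \<in> V)"
    then have "mathieu_subspace \<theta> ofK V" using assms by (simp add: quasi_stable_def)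
    then have "\<exists>N. \<forall>m\<ge>N. b * a ^ m \<in> V" using H LeftM unfolding mathieu_subspace_def by auto
    then obtain N where "\<forall>m\<ge>N. b * a ^ m \<in> V" by blast
    then show "\<exists>m\<ge>1. b * a ^ m \<in> V" by (intro exI[of _ "max N 1"]) auto
  qed
  then show ?thesis ..
next
  case RightM
  have WR unfolding WR_def
  proof (intro allI impI)
    fix V a b assume H: "K_subspace ofK V \<and> 1 \<notin> V \<and> (\<forall>m\<ge>1. a ^ m \<in> V)"
    then have "mathieu_subspace \<theta> ofK V" using assms by (simp add: quasi_stable_def)
    then have "\<exists>N. \<forall>m\<ge>N. a ^ m * b \<in> V" using H RightM unfolding mathieu_subspace_def by auto
    then obtain N where "\<forall>m\<ge>N. a ^ m * b \<in> V" by blast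
    then show "\<exists>m\<ge>1. a ^ m * b \<in> V" by (intro exI[of _ "max N 1"]) auto
  qed
  then show ?thesis ..
next
  case PreTwoSidedM
  have WL unfolding WL_def
  proof (intro allI impI)
    fix V a b assume H: "K_subspace ofK V \<and> 1 \<notin> V \<and> (\<forall>m\<ge>1. a ^ m \<in> V)"
    then have "mathieu_subspace \<theta> ofK V" using assms by (simp add: quasi_stable_def)
    then have "\<exists>N. \<forall>m\<ge>N. b * a ^ m \<in> V" using H PreTwoSidedM unfolding mathieu_subspace_def by auto
    then obtain N where "\<forall>m\<ge>N. b * a ^ m \<in> V" by blast
    then show "\<exists>m\<ge>1. b * a ^ m \<in> V" by (intro exI[of _ "max N 1"]) auto
  qed
  then show ?thesis ..
next
  case TwoSidedM
  have WL unfolding WL_def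
  proof (intro allI impI)
    fix V a b assume H: "K_subspace ofK V \<and> 1 \<notin> V \<and> (\<forall>m\<ge>1. a ^ m \<in> V)"
    then have "mathieu_subspace \<theta> ofK V" using assms by (simp add: quasi_stable_def)
    then have T: "\<forall>a. (\<forall>m\<ge>1. a ^ m \<in> V) \<longrightarrow> (\<forall>b c. \<exists>N. \<forall>m\<ge>N. b * a ^ m * c \<in> V)"
      using TwoSidedM by (simp add: mathieu_subspace_def)
    then have "\<exists>N. \<forall>m\<ge>N. b * a ^ m * 1 \<in> V" using H by blast
    then obtain N where "\<forall>m\<ge>N. b * a ^ m * 1 \<in> V" by blast
    then show "\<exists>m\<ge>1. b * a ^ m \<in> V" by (intro exI[of _ "max N 1"]) auto
  qed
  then show ?thesis ..
qed

lemma peval_inj: assumes "\<forall>p. p \<noteq> 0 \<longrightarrow> peval ofK p x \<noteq> 0" "peval ofK p x = peval ofK q x"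
  shows "p = q"
proof -
  have "peval ofK (p - q) x = 0" using assms(2) by (simp add: peval_diff)
  then have "p - q = 0" using assms(1) by blast
  then show ?thesis by simp
qed

lemma W_alg: assumes "WL \<or> WR" shows "algebraic_over ofK"
  unfolding algebraic_over_def
proof (rule allI, rule ccontr)
  fix x assume "\<not> (\<exists>p. p \<noteq> 0 \<and> peval ofK p x = 0)"
  then have T: "\<forall>p. p \<noteq> 0 \<longrightarrow> peval ofK p x \<noteq> 0" by blast
  define V where "V = {peval ofK p x | p. \<forall>i. (i = 0 \<or> odd i) \<longrightarrow> coeff p i = 0}"
  have sub: "K_subspace ofK V"
    unfolding K_subspace_def V_def
  proof (intro conjI ballI allI)
    show "0 \<in> {peval ofK p x | p. \<forall>i. (i = 0 \<or> odd i) \<longrightarrow> coeff p i = 0}"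
      by (rule CollectI, rule exI[of _ 0]) simp
  next
    fix u v assume "u \<in> {peval ofK p x | p. \<forall>i. (i = 0 \<or> odd i) \<longrightarrow> coeff p i = 0}"
      "v \<in> {peval ofK p x | p. \<forall>i. (i = 0 \<or> odd i) \<longrightarrow> coeff p i = 0}"
    then obtain p q where "u = peval ofK p x" "v = peval ofK q x"
      "\<forall>i. (i = 0 \<or> odd i) \<longrightarrow> coeff p i = 0" "\<forall>i. (i = 0 \<or> odd i) \<longrightarrow> coeff q i = 0" by auto
    then show "u + v \<in> {peval ofK p x | p. \<forall>i. (i = 0 \<or> odd i) \<longrightarrow> coeff p i = 0}"
      by (intro CollectI exI[of _ "p + q"]) (simp add: peval_add)
  next
    fix c u assume "u \<in> {peval ofK p x | p. \<forall>i. (i = 0 \<or> odd i) \<longrightarrow> coeff p i = 0}"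
    then obtain p where "u = peval ofK p x" "\<forall>i. (i = 0 \<or> odd i) \<longrightarrow> coeff p i = 0" by auto
    then show "ofK c * u \<in> {peval ofK p x | p. \<forall>i. (i = 0 \<or> odd i) \<longrightarrow> coeff p i = 0}"
      by (intro CollectI exI[of _ "smult c p"]) (simp add: peval_smult)
  qed
  have one: "1 \<notin> V"
  proof
    assume "1 \<in> V"
    then obtain p where "1 = peval ofK p x" "coeff p 0 = 0" unfolding V_def by auto
    then have "p = 1" using peval_inj[OF T, of p 1] by simp
    then show False using \<open>coeff p 0 = 0\<close> by simp
  qed
  have pw: "(x ^ 2) ^ m \<in> V" if "m \<ge> 1" for m
  proof -
    have "(x ^ 2) ^ m = peval ofK (monom 1 (2 * m)) x" by (simp add: peval_monom power_mult)
    moreover have "\<forall>i. (i = 0 \<or> odd i) \<longrightarrow> coeff (monom (1::'a) (2 * m)) i = 0"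
      using that by (auto simp: coeff_monom)
    ultimately show ?thesis unfolding V_def by blast
  qed
  have notin: "x ^ Suc (2 * m) \<notin> V" for m
  proof
    assume "x ^ Suc (2 * m) \<in> V"
    then obtain p where p: "x ^ Suc (2 * m) = peval ofK p x" "\<forall>i. (i = 0 \<or> odd i) \<longrightarrow> coeff p i = 0"
      unfolding V_def by auto
    have "monom 1 (Suc (2 * m)) = p" using peval_inj[OF T] p(1) by (simp add: peval_monom)
    then have "coeff p (Suc (2 * m)) = 1" by (metis coeff_monom)
    then show False using p(2)[rule_format, of "Suc (2*m)"] by simp
  qed
  have e1: "x * (x ^ 2) ^ m = x ^ Suc (2 * m)" for m by (simp add: power_mult)
  have e2: "(x ^ 2) ^ m * x = x ^ Suc (2 * m)" for m by (simp add: power_mult[symmetric] power_commutes)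
  from assms show False
  proof
    assume WL
    then obtain m where "m \<ge> 1" "x * (x ^ 2) ^ m \<in> V"
      unfolding WL_def using sub one pw by blast
    then show False using notin e1 by simp
  next
    assume WR
    then obtain m where "m \<ge> 1" "(x ^ 2) ^ m * x \<in> V"
      unfolding WR_def using sub one pw by blast
    then show False using notin e2 by simp
  qed
qed

end

context kalg begin

lemma idem_pow: assumes ee: "(e::'b) * e = e" shows "m \<ge> 1 \<Longrightarrow> e ^ m = e"
proof (induction m)
  case (Suc m)
  show ?case
  proof (cases "m = 0")
    case True then show ?thesis by simp
  next
    case False
    then have "e ^ m = e" using Suc.IH by simp
    then show ?thesis by (simp only: power_Suc2 ee)
  qed
qed simp

lemma iso_from_span:
  assumes ee: "(e::'b) * e = e" and ne0: "e \<noteq> 0" and ne1: "e \<noteq> 1"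
    and span: "\<forall>x. \<exists>c d. x = ofK c * e + ofK d * (1 - e)"
  shows "iso_KxK ofK"
proof -
  define f where "f = 1 - e"
  have ef: "e * f = 0" "f * e = 0" "f * f = f" using ee by (simp_all add: f_def algebra_simps)
  have fne: "f \<noteq> 0" using ne1 by (simp add: f_def)
  define R where "R cd = ofK (fst cd) * e + ofK (snd cd) * f" for cd
  have uniq: "c = c' \<and> d = d'" if "ofK c * e + ofK d * f = ofK c' * e + ofK d' * f" for c d c' d'
  proof -
    have "(ofK c * e + ofK d * f) * e = ofK c * e"
      by (simp add: distrib_right mult.assoc ee ef)
    moreover have "(ofK c' * e + ofK d' * f) * e = ofK c' * e"
      by (simp add: distrib_right mult.assoc ee ef)
    ultimately have "ofK (c - c') * e = 0" using that by (simp add: ofK_diff left_diff_distrib)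
    then have 1: "c = c'" using ofK_smult_eq0 ne0 by force
    have "(ofK c * e + ofK d * f) * f = ofK d * f"
      by (simp add: distrib_right mult.assoc ee ef)
    moreover have "(ofK c' * e + ofK d' * f) * f = ofK d' * f"
      by (simp add: distrib_right mult.assoc ee ef)
    ultimately have "ofK (d - d') * f = 0" using that by (simp add: ofK_diff left_diff_distrib)
    then have "d = d'" using ofK_smult_eq0 fne by force
    with 1 show ?thesis ..
  qed
  define g where "g x = (SOME cd. x = R cd)" for x
  have gR: "x = R (g x)" for x
  proof -
    from span obtain c d where "x = ofK c * e + ofK d * (1 - e)" by blast
    then have "x = R (c, d)" by (simp add: R_def f_def)
    then show ?thesis unfolding g_def by (rule someI)
  qed
  have Rinj: "R a = R b \<Longrightarrow> a = b" for a b
    using uniq[of "fst a" "snd a" "fst b" "snd b"] by (simp add: R_def prod_eq_iff)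
  have gchar: "g x = cd" if "x = R cd" for x cd
  proof -
    have "R (g x) = x" by (rule gR[symmetric])
    also have "x = R cd" by (rule that)
    finally show ?thesis by (rule Rinj)
  qed
  have gR': "g (R a) = a" for a by (rule gchar) (rule refl)
  have exR: "\<exists>a. x = R a" for x using gR by blast
  have Radd: "R a + R b = R (fst a + fst b, snd a + snd b)" for a b
    by (simp add: R_def ofK_add distrib_right add_ac)
  have cm: "ofK c * y * (ofK d * z) = ofK (c * d) * (y * z)" for c d y z
  proof -
    have "ofK c * y * (ofK d * z) = ofK c * (y * (ofK d * z))" by (simp only: mult.assoc)
    also have "y * (ofK d * z) = ofK d * (y * z)" by (rule ofK_comm2[symmetric])
    also have "ofK c * (ofK d * (y * z)) = ofK (c * d) * (y * z)" by (simp only: ofK_mult mult.assoc)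
    finally show ?thesis .
  qed
  have Rmul: "R a * R b = R (fst a * fst b, snd a * snd b)" for a b
    by (simp add: R_def distrib_left distrib_right cm ee ef)
  have Rsc: "ofK k * R a = R (k * fst a, k * snd a)" for k a
    by (simp add: R_def distrib_left ofK_mult mult.assoc)
  have R1: "1 = R (1, 1)" by (simp add: R_def f_def)
  have "bij g"
  proof (rule bijI)
    show "inj g"
    proof (rule injI)
      fix x y assume gxy: "g x = g y"
      have "x = R (g x)" by (rule gR)
      also have "\<dots> = R (g y)" using gxy by (rule arg_cong)
      also have "\<dots> = y" by (rule gR[symmetric])
      finally show "x = y" .
    qed
    show "surj g" by (rule surjI[of g R]) (rule gR')
  qed
  moreover have "\<forall>x y. g (x + y) = (fst (g x) + fst (g y), snd (g x) + snd (g y))"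
  proof (intro allI)
    fix x y
    obtain a b where ab: "x = R a" "y = R b" using exR by blast
    show "g (x + y) = (fst (g x) + fst (g y), snd (g x) + snd (g y))"
      unfolding ab Radd gR' by (rule refl)
  qed
  moreover have "\<forall>x y. g (x * y) = (fst (g x) * fst (g y), snd (g x) * snd (g y))"
  proof (intro allI)
    fix x y
    obtain a b where ab: "x = R a" "y = R b" using exR by blast
    show "g (x * y) = (fst (g x) * fst (g y), snd (g x) * snd (g y))"
      unfolding ab Rmul gR' by (rule refl)
  qed
  moreover have "\<forall>c x. g (ofK c * x) = (c * fst (g x), c * snd (g x))"
  proof (intro allI)
    fix c x
    obtain a where ab: "x = R a" using exR by blast
    show "g (ofK c * x) = (c * fst (g x), c * snd (g x))"
      unfolding ab Rsc gR' by (rule refl)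
  qed
  moreover have "g 1 = (1, 1)" by (subst R1) (rule gR')
  ultimately show ?thesis unfolding iso_KxK_def by blast
qed

lemma W_iso:
  assumes W: "WL \<or> WR" and ee: "(e::'b) * e = e" and ne0: "e \<noteq> 0" and ne1: "e \<noteq> 1"
  shows "iso_KxK ofK"
proof -
  have line: "K_subspace ofK {ofK c * g | c. True} \<and> 1 \<notin> {ofK c * g | c. True} \<and>
      (\<forall>m\<ge>1. g ^ m \<in> {ofK c * g | c. True})"
    if gg: "g * g = g" and g1: "g \<noteq> 1" for g :: 'b
  proof (intro conjI)
    show "K_subspace ofK {ofK c * g | c. True}"
      unfolding K_subspace_def
      by (auto simp: distrib_right[symmetric] ofK_add[symmetric] mult.assoc[symmetric]
            ofK_mult[symmetric] intro: exI[of _ 0])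
    show "1 \<notin> {ofK c * g | c. True}"
    proof
      assume "1 \<in> {ofK c * g | c. True}"
      then obtain c where c: "1 = ofK c * g" by auto
      then have "1 - g = ofK c * g * (1 - g)" by simp
      also have "\<dots> = 0" using gg by (simp add: mult.assoc algebra_simps)
      finally show False using g1 by simp
    qed
    show "\<forall>m\<ge>1. g ^ m \<in> {ofK c * g | c. True}"
      using idem_pow[OF gg] by (auto intro: exI[of _ 1])
  qed
  have fe: "(1 - e) * (1 - e) = 1 - e" using ee by (simp add: algebra_simps)
  have f1: "1 - e \<noteq> 1" using ne0 by simp
  note Le = line[OF ee ne1] and Lf = line[OF fe f1]
  have span: "\<forall>x. \<exists>c d. x = ofK c * e + ofK d * (1 - e)"
  proof
    fix x
    from W show "\<exists>c d. x = ofK c * e + ofK d * (1 - e)"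
    proof
      assume WL
      obtain m where "m \<ge> 1" "x * e ^ m \<in> {ofK c * e | c. True}"
        using \<open>WL\<close> Le unfolding WL_def by blast
      then obtain c where c: "x * e = ofK c * e" using idem_pow[OF ee] by auto
      obtain m' where "m' \<ge> 1" "x * (1 - e) ^ m' \<in> {ofK c * (1 - e) | c. True}"
        using \<open>WL\<close> Lf unfolding WL_def by blast
      then obtain d where d: "x * (1 - e) = ofK d * (1 - e)" using idem_pow[OF fe] by auto
      have "x = x * e + x * (1 - e)" by (simp add: algebra_simps)
      then show ?thesis using c d by auto
    next
      assume WR
      obtain m where "m \<ge> 1" "e ^ m * x \<in> {ofK c * e | c. True}"
        using \<open>WR\<close> Le unfolding WR_def by blast
      then obtain c where c: "e * x = ofK c * e" using idem_pow[OF ee] by auto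
      obtain m' where "m' \<ge> 1" "(1 - e) ^ m' * x \<in> {ofK c * (1 - e) | c. True}"
        using \<open>WR\<close> Lf unfolding WR_def by blast
      then obtain d where d: "(1 - e) * x = ofK d * (1 - e)" using idem_pow[OF fe] by auto
      have "x = e * x + (1 - e) * x" by (simp add: algebra_simps)
      then show ?thesis using c d by auto
    qed
  qed
  show ?thesis by (rule iso_from_span[OF ee ne0 ne1 span])
qed

definition SP where "SP \<longleftrightarrow> (\<forall>V. K_subspace ofK V \<and> 1 \<notin> V \<longrightarrow>
   (\<forall>a. (\<forall>m\<ge>1. a ^ m \<in> V) \<longrightarrow> (\<exists>N. \<forall>m\<ge>N. \<forall>b c. b * a ^ m * c \<in> V)))"

lemma SP_qs: assumes SP shows "quasi_stable \<theta> ofK"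
  unfolding quasi_stable_def
proof (intro allI impI)
  fix V assume H: "K_subspace ofK V \<and> 1 \<notin> V"
  have S: "\<exists>N. \<forall>m\<ge>N. \<forall>b c. b * a ^ m * c \<in> V" if "\<forall>m\<ge>1. a ^ m \<in> V" for a
    using assms H that unfolding SP_def by blast
  have L: "\<exists>N. \<forall>m\<ge>N. b * a ^ m \<in> V" if "\<forall>m\<ge>1. a ^ m \<in> V" for a b
    using S[OF that] by (metis mult_1_right)
  have R: "\<exists>N. \<forall>m\<ge>N. a ^ m * b \<in> V" if "\<forall>m\<ge>1. a ^ m \<in> V" for a b
    using S[OF that] by (metis mult_1_left)
  have T: "\<forall>a. (\<forall>m\<ge>1. a ^ m \<in> V) \<longrightarrow> (\<forall>b c. \<exists>N. \<forall>m\<ge>N. b * a ^ m * c \<in> V)"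
    using S by blast
  have L': "\<forall>a. (\<forall>m\<ge>1. a ^ m \<in> V) \<longrightarrow> (\<forall>b. \<exists>N. \<forall>m\<ge>N. b * a ^ m \<in> V)"
    using L by blast
  have R': "\<forall>a. (\<forall>m\<ge>1. a ^ m \<in> V) \<longrightarrow> (\<forall>b. \<exists>N. \<forall>m\<ge>N. a ^ m * b \<in> V)"
    using R by blast
  have HK: "K_subspace ofK V" using H by blast
  show "mathieu_subspace \<theta> ofK V"
  proof (cases \<theta>)
    case LeftM then show ?thesis unfolding mathieu_subspace_def using HK L' by simp
  next
    case RightM then show ?thesis unfolding mathieu_subspace_def using HK R' by simp
  next
    case PreTwoSidedM then show ?thesis unfolding mathieu_subspace_def using HK L' R' by simp
  next
    case TwoSidedM then show ?thesis unfolding mathieu_subspace_def using HK T by simp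
  qed
qed

lemma sum_in_sub: assumes V: "K_subspace ofK V"
  shows "finite S \<Longrightarrow> (\<forall>i\<in>S. h i \<in> V) \<Longrightarrow> sum h S \<in> V"
proof (induction S rule: finite_induct)
  case empty then show ?case using V by (simp add: K_subspace_def)
next
  case (insert i S) then show ?case using V by (simp add: K_subspace_def)
qed

lemma peval_in_V:
  assumes V: "K_subspace ofK V" and pw: "\<forall>m\<ge>1. a ^ m \<in> V" and c0: "coeff p 0 = 0"
  shows "peval ofK p a \<in> V"
  unfolding peval_def
proof (rule sum_in_sub[OF V], simp, intro ballI)
  fix i assume "i \<in> {..degree p}"
  show "ofK (coeff p i) * a ^ i \<in> V"
  proof (cases "i = 0")
    case True then show ?thesis using c0 V by (simp add: K_subspace_def)
  next
    case False then show ?thesis using pw V by (simp add: K_subspace_def)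
  qed
qed

lemma local_SP: assumes L: "local_ring TYPE('b)" and A: "algebraic_over ofK" shows SP
  unfolding SP_def
proof (intro allI impI)
  fix V a assume H: "K_subspace ofK V \<and> 1 \<notin> V" and pw: "\<forall>m\<ge>1. a ^ m \<in> V"
  obtain p where p: "p \<noteq> 0" "peval ofK p a = 0" using A unfolding algebraic_over_def by blast
  from trich[OF p] show "\<exists>N. \<forall>m\<ge>N. \<forall>b c. b * a ^ m * c \<in> V"
  proof (elim disjE exE conjE)
    fix k assume k: "a ^ k = 0"
    have "a ^ m = 0" if "m \<ge> k" for m
      using that k by (metis le_add_diff_inverse mult_zero_left power_add)
    then show ?thesis using H by (intro exI[of _ k]) (auto simp: K_subspace_def)
  next
    fix e :: 'b assume e: "e * e = e" "e \<noteq> 0" "e \<noteq> 1"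
    have "e = 0 \<or> e = 1" by (rule local_no_idem[OF L e(1)])
    then show ?thesis using e by blast
  next
    fix q assume "coeff q 0 = 0" "peval ofK q a = 1"
    then show ?thesis using peval_in_V[of V a q] H pw by auto
  qed
qed

lemma iso_SP: assumes I: "iso_KxK ofK" shows SP
proof -
  obtain g :: "'b \<Rightarrow> 'a \<times> 'a" where bg: "bij g"
    and gadd: "\<forall>x y. g (x + y) = (fst (g x) + fst (g y), snd (g x) + snd (g y))"
    and gmul: "\<forall>x y. g (x * y) = (fst (g x) * fst (g y), snd (g x) * snd (g y))"
    and gsc: "\<forall>c x. g (ofK c * x) = (c * fst (g x), c * snd (g x))"
    and g1: "g 1 = (1, 1)"
    using I unfolding iso_KxK_def by blast
  have ginj: "g x = g y \<Longrightarrow> x = y" for x y using bg by (meson bij_def injD)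
  have gpow: "g (a ^ m) = (fst (g a) ^ m, snd (g a) ^ m)" for a m
    by (induction m) (simp_all add: g1 gmul)
  show SP unfolding SP_def
  proof (intro allI impI)
    fix V a assume H: "K_subspace ofK V \<and> 1 \<notin> V" and pw: "\<forall>m\<ge>1. a ^ m \<in> V"
    define \<alpha> where "\<alpha> = fst (g a)"
    define \<beta> where "\<beta> = snd (g a)"
    have ab: "\<alpha> = 0 \<or> \<beta> = 0"
    proof (rule ccontr)
      assume nz: "\<not> (\<alpha> = 0 \<or> \<beta> = 0)"
      define c where "c = inverse \<alpha> + inverse \<beta>"
      define d where "d = - inverse (\<alpha> * \<beta>)"
      define w where "w = ofK c * a + ofK d * a ^ 2"
      have "a ^ 1 \<in> V" "a ^ 2 \<in> V" using pw by auto
      then have "ofK c * a \<in> V" "ofK d * a ^ 2 \<in> V" using H unfolding K_subspace_def by auto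
      then have wV: "w \<in> V" using H unfolding w_def K_subspace_def by blast
      have e1: "c * \<alpha> + d * \<alpha> ^ 2 = 1" using nz unfolding c_def d_def
        by (simp add: field_simps power2_eq_square)
      have e2: "c * \<beta> + d * \<beta> ^ 2 = 1" using nz unfolding c_def d_def
        by (simp add: field_simps power2_eq_square)
      have "g w = (c * \<alpha> + d * \<alpha> ^ 2, c * \<beta> + d * \<beta> ^ 2)"
        unfolding w_def \<alpha>_def \<beta>_def by (simp only: gadd gsc gpow fst_conv snd_conv)
      also have "\<dots> = g 1" using e1 e2 g1 by simp
      finally have "w = 1" by (rule ginj)
      then show False using wV H by simp
    qed
    have key: "b * a ^ m * c \<in> V" if "m \<ge> 1" for m b c
    proof -
      have gl: "g (b * a ^ m * c) = (fst (g b) * \<alpha> ^ m * fst (g c), snd (g b) * \<beta> ^ m * snd (g c))"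
        unfolding \<alpha>_def \<beta>_def by (simp only: gmul gpow fst_conv snd_conv)
      have gr: "g (ofK k * a ^ m) = (k * \<alpha> ^ m, k * \<beta> ^ m)" for k
        unfolding \<alpha>_def \<beta>_def by (simp only: gsc gpow fst_conv snd_conv)
      have m0: "m \<noteq> 0" using that by simp
      have "\<exists>k. g (b * a ^ m * c) = g (ofK k * a ^ m)"
      proof (cases "\<alpha> = 0")
        case True
        then have "g (b * a ^ m * c) = g (ofK (snd (g b) * snd (g c)) * a ^ m)"
          unfolding gl gr using m0 by (simp add: mult_ac)
        then show ?thesis by blast
      next
        case False
        then have "\<beta> = 0" using ab by simp
        then have "g (b * a ^ m * c) = g (ofK (fst (g b) * fst (g c)) * a ^ m)"
          unfolding gl gr using m0 by (simp add: mult_ac)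
        then show ?thesis by blast
      qed
      then obtain k where "g (b * a ^ m * c) = g (ofK k * a ^ m)" by blast
      then have "b * a ^ m * c = ofK k * a ^ m" using ginj by blast
      then show ?thesis using H pw that by (simp add: K_subspace_def)
    qed
    then show "\<exists>N. \<forall>m\<ge>N. \<forall>b c. b * a ^ m * c \<in> V" by (intro exI[of _ 1]) auto
  qed
qed

end

theorem theorem7p6:
  fixes ofK :: "'a::field \<Rightarrow> 'b::ring_1" and \<theta> :: mtype
  assumes "K_algebra ofK"
  shows "quasi_stable \<theta> ofK \<longleftrightarrow>
           iso_KxK ofK \<or> (local_ring TYPE('b) \<and> algebraic_over ofK)"
proof -
  interpret kalg ofK using assms by unfold_locales
  show ?thesis
  proof
    assume qs: "quasi_stable \<theta> ofK"
    have W: "WL \<or> WR" using qs_W[OF qs] .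
    have alg: "algebraic_over ofK" using W_alg[OF W] .
    show "iso_KxK ofK \<or> (local_ring TYPE('b) \<and> algebraic_over ofK)"
    proof (cases "\<exists>e::'b. e * e = e \<and> e \<noteq> 0 \<and> e \<noteq> 1")
      case True
      then obtain e :: 'b where "e * e = e" "e \<noteq> 0" "e \<noteq> 1" by blast
      then show ?thesis using W_iso[OF W] by blast
    next
      case False
      have "\<forall>x::'b. (\<exists>k. x ^ k = 0) \<or> isunit x"
      proof
        fix x :: 'b
        obtain p where p: "p \<noteq> 0" "peval ofK p x = 0" using alg unfolding algebraic_over_def by blast
        from trich[OF p] False show "(\<exists>k. x ^ k = 0) \<or> isunit x"
          using unit_of_poly by blast
      qed
      then have "local_ring TYPE('b)" by (rule local_of_unit_nilp)
      then show ?thesis using alg by blast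
    qed
  next
    assume "iso_KxK ofK \<or> (local_ring TYPE('b) \<and> algebraic_over ofK)"
    then have SP using iso_SP local_SP by blast
    then show "quasi_stable \<theta> ofK" by (rule SP_qs)
  qed
qed

end
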